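(* For every $n\ge2$, $$\sum_{k=1}^{n-1}k^2\,d_{k,n}=(4n-1)(2n-3)!!-3(2n-2)!!.$$
   Context: $\mathcal{T}_n$ is the set of fully resolved (binary) rooted trees with leaves bijectively labeled by $\{1,\dots,n\}$, and $d_{k,n}=|\{T\in\mathcal{T}_n:\delta_T(1)=k\}|$, where $\delta_T(1)$ is the depth (number of arcs from the root) of leaf $1$ in $T$. Double factorials: $(2m-1)!!=(2m-1)(2m-3)\cdots1$, $(2m)!!=(2m)(2m-2)\cdots2$, $0!!=1$. *)

theory Defs
  imports Main
begin

text \<open>Children of an internal node are
  unordered; we represent each unordered tree by its canonical ordered form, in which
  the left subtree contains the smallest leaf label of the node.\<close>

datatype btree = Leaf nat | Node btree btree

fun leaves :: "btree \<Rightarrow> nat set" where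
  "leaves (Leaf i) = {i}"
| "leaves (Node l r) = leaves l \<union> leaves r"

fun wf_tree :: "btree \<Rightarrow> bool" where
  "wf_tree (Leaf i) = True"
| "wf_tree (Node l r) = (wf_tree l \<and> wf_tree r \<and> leaves l \<inter> leaves r = {}
      \<and> Min (leaves l) < Min (leaves r))"

definition trees :: "nat \<Rightarrow> btree set" where
  "trees n = {t. wf_tree t \<and> leaves t = {1..n}}"

fun depth :: "nat \<Rightarrow> btree \<Rightarrow> nat" where
  "depth i (Leaf j) = 0"
| "depth i (Node l r) = Suc (if i \<in> leaves l then depth i l else depth i r)"

definition d :: "nat \<Rightarrow> nat \<Rightarrow> nat" where
  "d k n = card {t \<in> trees n. depth 1 t = k}"

fun dfact :: "nat \<Rightarrow> nat" where
  "dfact 0 = 1"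
| "dfact (Suc 0) = 1"
| "dfact (Suc (Suc m)) = (Suc (Suc m)) * dfact m"

end

theory Submission
  imports Defs
begin

fun ins :: "nat \<Rightarrow> btree \<Rightarrow> btree list" where
  "ins x (Leaf j) = [Node (Leaf j) (Leaf x)]"
| "ins x (Node l r) = Node (Node l r) (Leaf x) # map (\<lambda>l'. Node l' r) (ins x l) @ map (\<lambda>r'. Node l r') (ins x r)"

fun del :: "nat \<Rightarrow> btree \<Rightarrow> btree" where
  "del x (Leaf j) = Leaf j"
| "del x (Node l r) = (if l = Leaf x then r else if r = Leaf x then l
     else if x \<in> leaves l then Node (del x l) r else Node l (del x r))"

fun nl :: "btree \<Rightarrow> nat" where
  "nl (Leaf j) = 1"
| "nl (Node l r) = nl l + nl r"

lemma leaves_finite[simp]: "finite (leaves t)"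
  by (induction t) auto

lemma leaves_ne[simp]: "leaves t \<noteq> {}"
  by (induction t) auto

lemma nl_pos: "nl t \<ge> 1"
  by (induction t) auto

lemma card_leaves: "wf_tree t \<Longrightarrow> card (leaves t) = nl t"
  by (induction t) (auto simp: card_Un_disjoint)

lemma singleton_leaf: "wf_tree t \<Longrightarrow> leaves t = {a} \<Longrightarrow> t = Leaf a"
proof (induction t)
  case (Leaf x)
  then show ?case by simp
next
  case (Node l r)
  have "leaves l \<subseteq> {a}" "leaves r \<subseteq> {a}" using Node.prems by auto
  then have "leaves l = {a}" "leaves r = {a}" using leaves_ne
    by (metis subset_singletonD)+
  then show ?case using Node.prems by auto
qed

lemma ins_leaves: "t' \<in> set (ins x t) \<Longrightarrow> leaves t' = insert x (leaves t)"
  by (induction t arbitrary: t') auto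

lemma Min_insert_big: "\<forall>y\<in>A. y < x \<Longrightarrow> finite A \<Longrightarrow> A \<noteq> {} \<Longrightarrow> Min (insert x A) = Min A"
  by (simp add: Min_insert min_def) (meson Min_in less_le_not_le)

lemma ins_wf: "wf_tree t \<Longrightarrow> \<forall>y\<in>leaves t. y < x \<Longrightarrow> t' \<in> set (ins x t) \<Longrightarrow> wf_tree t'"
proof (induction t arbitrary: t')
  case (Leaf j)
  then show ?case by auto
next
  case (Node l r)
  have m: "Min (leaves (Node l r)) < x" using Node.prems(2) Min_in[of "leaves (Node l r)"]
    by (metis leaves_finite leaves_ne)
  have c: "t' = Node (Node l r) (Leaf x) \<or> (\<exists>l'\<in>set (ins x l). t' = Node l' r) \<or> (\<exists>r'\<in>set (ins x r). t' = Node l r')"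
    using Node.prems(3) by auto
  show ?case using c
  proof (elim disjE bexE)
    assume "t' = Node (Node l r) (Leaf x)" then show ?case using Node.prems m by auto
  next
    fix l' assume 2: "l' \<in> set (ins x l)" "t' = Node l' r"
    then show ?case using Node.prems Node.IH(1)[of l'] ins_leaves[of l' x l]
      Min_insert_big[of "leaves l" x] by auto
  next
    fix r' assume 3: "r' \<in> set (ins x r)" "t' = Node l r'"
    then show ?case using Node.prems Node.IH(2)[of r'] ins_leaves[of r' x r]
      Min_insert_big[of "leaves r" x] by auto
  qed
qed

lemma del_ins: "x \<notin> leaves t \<Longrightarrow> t' \<in> set (ins x t) \<Longrightarrow> del x t' = t"
proof (induction t arbitrary: t')
  case (Leaf j)
  then show ?case by auto
next
  case (Node l r)
  have c: "t' = Node (Node l r) (Leaf x) \<or> (\<exists>l'\<in>set (ins x l). t' = Node l' r) \<or> (\<exists>r'\<in>set (ins x r). t' = Node l r')"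
    using Node.prems(2) by auto
  show ?case using c
  proof (elim disjE bexE)
    assume "t' = Node (Node l r) (Leaf x)" then show ?case using Node.prems by auto
  next
    fix l' assume 2: "l' \<in> set (ins x l)" "t' = Node l' r"
    have "l' \<noteq> Leaf x" using ins_leaves[OF 2(1)] leaves_ne[of l] Node.prems(1)
      by (metis Diff_insert_absorb Diff_cancel Un_iff leaves.simps(1,2))
    moreover have "r \<noteq> Leaf x" using Node.prems(1) by auto
    moreover have "x \<in> leaves l'" using ins_leaves[OF 2(1)] by auto
    ultimately show ?case using Node.IH(1)[OF _ 2(1)] Node.prems(1) 2(2) by auto
  next
    fix r' assume 3: "r' \<in> set (ins x r)" "t' = Node l r'"
    have "r' \<noteq> Leaf x" using ins_leaves[OF 3(1)] leaves_ne[of r] Node.prems(1)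
      by (metis Diff_insert_absorb Diff_cancel Un_iff leaves.simps(1,2))
    moreover have "l \<noteq> Leaf x" using Node.prems(1) by auto
    moreover have "x \<notin> leaves l" using Node.prems(1) by auto
    ultimately show ?case using Node.IH(2)[OF _ 3(1)] Node.prems(1) 3(2) by auto
  qed
qed

lemma ins_distinct: "x \<notin> leaves t \<Longrightarrow> distinct (ins x t)"
proof (induction t)
  case (Leaf j)
  then show ?case by auto
next
  case (Node l r)
  have d1: "distinct (map (\<lambda>l'. Node l' r) (ins x l))"
    using Node by (auto simp: distinct_map inj_on_def)
  have d2: "distinct (map (\<lambda>r'. Node l r') (ins x r))"
    using Node by (auto simp: distinct_map inj_on_def)
  have d3: "set (map (\<lambda>l'. Node l' r) (ins x l)) \<inter> set (map (\<lambda>r'. Node l r') (ins x r)) = {}"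
  proof (rule ccontr)
    assume "\<not> ?thesis"
    then obtain l' where "l' \<in> set (ins x l)" "l' = l" by auto
    then show False using ins_leaves[of l' x l] Node.prems by auto
  qed
  have d4: "Node (Node l r) (Leaf x) \<notin> set (map (\<lambda>l'. Node l' r) (ins x l)) \<union> set (map (\<lambda>r'. Node l r') (ins x r))"
    using Node.prems by auto
  show ?case using d1 d2 d3 d4 by simp
qed

lemma del_wf: "wf_tree t \<Longrightarrow> x \<in> leaves t \<Longrightarrow> leaves t \<noteq> {x} \<Longrightarrow> \<forall>y\<in>leaves t. y \<le> x
  \<Longrightarrow> wf_tree (del x t) \<and> leaves (del x t) = leaves t - {x} \<and> t \<in> set (ins x (del x t))"
proof (induction t)
  case (Leaf j)
  then show ?case by auto
next
  case (Node l r)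
  have wl: "wf_tree l" "wf_tree r" "leaves l \<inter> leaves r = {}" "Min (leaves l) < Min (leaves r)"
    using Node.prems(1) by auto
  have mr: "Min (leaves r) \<le> x" using Node.prems(4) Min_in[of "leaves r"] by auto
  have nl: "l \<noteq> Leaf x"
  proof
    assume "l = Leaf x" then have "x < Min (leaves r)" using wl(4) by simp
    with mr show False by simp
  qed
  show ?case
  proof (cases "r = Leaf x")
    case True
    then show ?thesis using nl wl by (cases l) auto
  next
    case rx: False
    show ?thesis
    proof (cases "x \<in> leaves l")
      case True
      have "leaves l \<noteq> {x}" using singleton_leaf[OF wl(1)] nl by auto
      then have IH: "wf_tree (del x l) \<and> leaves (del x l) = leaves l - {x} \<and> l \<in> set (ins x (del x l))"
        using Node.IH(1) wl True Node.prems(4) by auto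
      have "Min (leaves l) \<noteq> x" using wl(4) mr by linarith
      then have "Min (leaves l) \<in> leaves l - {x}" using Min_in[of "leaves l"] by auto
      then have "Min (leaves l - {x}) = Min (leaves l)"
        by (metis Diff_subset Min_antimono Min_le antisym empty_iff finite_Diff leaves_finite)
      then show ?thesis using IH wl True nl rx by auto
    next
      case False
      then have xr: "x \<in> leaves r" using Node.prems(2) by auto
      have "leaves r \<noteq> {x}" using singleton_leaf[OF wl(2)] rx by auto
      then have IH: "wf_tree (del x r) \<and> leaves (del x r) = leaves r - {x} \<and> r \<in> set (ins x (del x r))"
        using Node.IH(2) wl xr Node.prems(4) by auto
      have ne: "leaves r - {x} \<noteq> {}" using \<open>leaves r \<noteq> {x}\<close> xr by auto
      have "Min (leaves r - {x}) \<in> leaves r" using Min_in[OF _ ne] by auto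
      then have "Min (leaves r) \<le> Min (leaves r - {x})" by simp
      then have "Min (leaves l) < Min (leaves r - {x})" using wl(4) by linarith
      then show ?thesis using IH wl False nl rx by auto
    qed
  qed
qed

lemma depth_lt: "i \<in> leaves t \<Longrightarrow> depth i t < nl t"
proof (induction t)
  case (Leaf j) then show ?case by simp
next
  case (Node l r) then show ?case using nl_pos[of l] nl_pos[of r] by auto
qed

lemma len: "length (ins x t) = 2 * nl t - 1"
proof (induction t)
  case (Node l r)
  have "nl l \<ge> 1" "nl r \<ge> 1" by (rule nl_pos)+
  then show ?case using Node by simp
qed simp

lemma ins_depth_sum: "i \<in> leaves t \<Longrightarrow> i \<noteq> x \<Longrightarrow>
  sum_list (map (\<lambda>t'. f (depth i t')) (ins x t)) =
    int (depth i t + 1) * f (depth i t + 1) + (2 * int (nl t) - 2 - int (depth i t)) * f (depth i t)"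
proof (induction t arbitrary: f)
  case (Leaf j) then show ?case by simp
next
  case (Node l r)
  define g where "g = (\<lambda>t'. f (depth i t'))"
  have sp: "sum_list (map g (ins x (Node l r))) = g (Node (Node l r) (Leaf x))
     + sum_list (map g (map (\<lambda>l'. Node l' r) (ins x l))) + sum_list (map g (map (\<lambda>r'. Node l r') (ins x r)))"
    by simp
  have n1: "int (nl l) \<ge> 1" "int (nl r) \<ge> 1" using nl_pos[of l] nl_pos[of r] by auto
  show ?case
  proof (cases "i \<in> leaves l")
    case True
    have e1: "map g (map (\<lambda>l'. Node l' r) (ins x l))
       = map (\<lambda>t'. (f \<circ> Suc) (depth i t')) (ins x l)"
      using True ins_leaves[of _ x l] by (auto simp: g_def)
    have e2: "map g (map (\<lambda>r'. Node l r') (ins x r))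
       = map (\<lambda>t'. f (Suc (depth i l))) (ins x r)"
      using True by (auto simp: g_def)
    have s2: "sum_list (map (\<lambda>t'. f (Suc (depth i l))) (ins x r)) = (2 * int (nl r) - 1) * f (Suc (depth i l))"
      using n1 by (simp add: sum_list_triv len of_nat_diff)
    have s1: "sum_list (map (\<lambda>t'. (f \<circ> Suc) (depth i t')) (ins x l)) =
      int (depth i l + 1) * f (Suc (depth i l + 1)) + (2 * int (nl l) - 2 - int (depth i l)) * f (Suc (depth i l))"
      using Node.IH(1)[of "f \<circ> Suc"] True Node.prems(2) by simp
    have g0: "g (Node (Node l r) (Leaf x)) = f (Suc (Suc (depth i l)))" using True by (simp add: g_def)
    have "sum_list (map g (ins x (Node l r))) = int (depth i (Node l r) + 1) * f (depth i (Node l r) + 1) + (2 * int (nl (Node l r)) - 2 - int (depth i (Node l r))) * f (depth i (Node l r))"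
      unfolding sp e1 e2 s1 s2 g0 using True by (simp add: algebra_simps)
    then show ?thesis by (simp add: g_def)
  next
    case False
    then have ir: "i \<in> leaves r" using Node.prems by auto
    have e1: "map g (map (\<lambda>r'. Node l r') (ins x r))
       = map (\<lambda>t'. (f \<circ> Suc) (depth i t')) (ins x r)"
      using False by (auto simp: g_def)
    have e2: "map g (map (\<lambda>l'. Node l' r) (ins x l))
       = map (\<lambda>t'. f (Suc (depth i r))) (ins x l)"
      using False Node.prems ins_leaves[of _ x l] by (auto simp: g_def)
    have s2: "sum_list (map (\<lambda>t'. f (Suc (depth i r))) (ins x l)) = (2 * int (nl l) - 1) * f (Suc (depth i r))"
      using n1 by (simp add: sum_list_triv len of_nat_diff)
    have s1: "sum_list (map (\<lambda>t'. (f \<circ> Suc) (depth i t')) (ins x r)) =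
      int (depth i r + 1) * f (Suc (depth i r + 1)) + (2 * int (nl r) - 2 - int (depth i r)) * f (Suc (depth i r))"
      using Node.IH(2)[of "f \<circ> Suc"] ir Node.prems(2) by simp
    have g0: "g (Node (Node l r) (Leaf x)) = f (Suc (Suc (depth i r)))" using False ir by (simp add: g_def)
    have "sum_list (map g (ins x (Node l r))) = int (depth i (Node l r) + 1) * f (depth i (Node l r) + 1) + (2 * int (nl (Node l r)) - 2 - int (depth i (Node l r))) * f (depth i (Node l r))"
      unfolding sp e1 e2 s1 s2 g0 using False by (simp add: algebra_simps)
    then show ?thesis by (simp add: g_def)
  qed
qed

lemma trees_1: "trees 1 = {Leaf 1}"
  using singleton_leaf by (auto simp: trees_def)

lemma trees_Suc: assumes "n \<ge> 1"
  shows "trees (Suc n) = (\<Union>t\<in>trees n. set (ins (Suc n) t))"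
proof
  show "trees (Suc n) \<subseteq> (\<Union>t\<in>trees n. set (ins (Suc n) t))"
  proof
    fix t' assume "t' \<in> trees (Suc n)"
    then have w: "wf_tree t'" "leaves t' = {1..Suc n}" by (auto simp: trees_def)
    have "leaves t' \<noteq> {Suc n}" using w(2) assms by auto
    then have D: "wf_tree (del (Suc n) t') \<and> leaves (del (Suc n) t') = leaves t' - {Suc n} \<and> t' \<in> set (ins (Suc n) (del (Suc n) t'))"
      using del_wf[OF w(1)] w(2) by auto
    moreover have "{1..Suc n} - {Suc n} = {1..n}" by auto
    ultimately have "del (Suc n) t' \<in> trees n" using w(2) by (auto simp: trees_def)
    with D show "t' \<in> (\<Union>t\<in>trees n. set (ins (Suc n) t))" by blast
  qed
next
  show "(\<Union>t\<in>trees n. set (ins (Suc n) t)) \<subseteq> trees (Suc n)"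
  proof (safe)
    fix t t' assume "t \<in> trees n" "t' \<in> set (ins (Suc n) t)"
    moreover have "insert (Suc n) {1..n} = {1..Suc n}" by auto
    ultimately show "t' \<in> trees (Suc n)" using ins_wf[of t "Suc n" t'] ins_leaves[of t' "Suc n" t]
      by (auto simp: trees_def)
  qed
qed

lemma trees_finite: "n \<ge> 1 \<Longrightarrow> finite (trees n)"
proof (induction n rule: nat_induct_at_least)
  case base
  show ?case unfolding trees_1 by simp
next
  case (Suc n) then show ?case by (simp add: trees_Suc)
qed

lemma sum_trees: assumes "n \<ge> 1"
  shows "(\<Sum>t'\<in>trees (Suc n). f (depth 1 t')) =
    (\<Sum>t\<in>trees n. int (depth 1 t + 1) * f (depth 1 t + 1) + (2 * int n - 2 - int (depth 1 t)) * f (depth 1 t))"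
proof -
  have disj: "\<forall>t1\<in>trees n. \<forall>t2\<in>trees n. t1 \<noteq> t2 \<longrightarrow> set (ins (Suc n) t1) \<inter> set (ins (Suc n) t2) = {}"
  proof (intro ballI impI)
    fix t1 t2 assume t: "t1 \<in> trees n" "t2 \<in> trees n" "t1 \<noteq> t2"
    have "Suc n \<notin> leaves t1" "Suc n \<notin> leaves t2" using t(1,2) by (auto simp: trees_def)
    then show "set (ins (Suc n) t1) \<inter> set (ins (Suc n) t2) = {}"
      using del_ins[of "Suc n" t1] del_ins[of "Suc n" t2] t(3) by blast
  qed
  have "(\<Sum>t'\<in>trees (Suc n). f (depth 1 t')) = (\<Sum>t\<in>trees n. \<Sum>t'\<in>set (ins (Suc n) t). f (depth 1 t'))"
    unfolding trees_Suc[OF assms] by (rule sum.UNION_disjoint[OF trees_finite[OF assms] _ disj]) simp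
  also have "\<dots> = (\<Sum>t\<in>trees n. int (depth 1 t + 1) * f (depth 1 t + 1) + (2 * int n - 2 - int (depth 1 t)) * f (depth 1 t))"
  proof (rule sum.cong[OF refl])
    fix t assume t: "t \<in> trees n"
    then have w: "wf_tree t" "leaves t = {1..n}" by (auto simp: trees_def)
    have "nl t = n" using card_leaves[OF w(1)] w(2) by simp
    moreover have "Suc n \<notin> leaves t" "1 \<in> leaves t" using w(2) assms by auto
    ultimately show "(\<Sum>t'\<in>set (ins (Suc n) t). f (depth 1 t')) = int (depth 1 t + 1) * f (depth 1 t + 1) + (2 * int n - 2 - int (depth 1 t)) * f (depth 1 t)"
      using ins_depth_sum[of 1 t "Suc n" f] ins_distinct[of "Suc n" t] assms
      by (simp add: sum_list_distinct_conv_sum_set)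
  qed
  finally show ?thesis .
qed



definition S :: "nat \<Rightarrow> nat \<Rightarrow> int" where
  "S p n = (\<Sum>t\<in>trees n. int (depth 1 t) ^ p)"

lemma S_rec0: assumes "n \<ge> 1"
  shows "S 0 (Suc n) = (2 * int n - 1) * S 0 n"
proof -
  have "S 0 (Suc n) = (\<Sum>t\<in>trees n. 2 * int n - 1)"
    unfolding S_def sum_trees[OF assms, of "\<lambda>k. int k ^ 0"]
    by (rule sum.cong[OF refl]) simp
  then show ?thesis by (simp add: S_def mult.commute)
qed

lemma S_rec1: assumes "n \<ge> 1"
  shows "S 1 (Suc n) = 2 * int n * S 1 n + S 0 n"
proof -
  have "S 1 (Suc n) = (\<Sum>t\<in>trees n. 2 * int n * int (depth 1 t) + 1)"
    unfolding S_def sum_trees[OF assms, of "\<lambda>k. int k ^ 1"]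
  proof (rule sum.cong[OF refl])
    fix t
    define k where "k = int (depth 1 t)"
    have "int (depth 1 t + 1) * int (depth 1 t + 1) ^ 1 + (2 * int n - 2 - int (depth 1 t)) * int (depth 1 t) ^ 1
      = (k + 1) * (k + 1) + (2 * int n - 2 - k) * k" by (simp add: k_def add.commute)
    also have "\<dots> = 2 * int n * k + 1" by algebra
    finally show "int (depth 1 t + 1) * int (depth 1 t + 1) ^ 1 + (2 * int n - 2 - int (depth 1 t)) * int (depth 1 t) ^ 1
      = 2 * int n * int (depth 1 t) + 1" by (simp add: k_def add.commute)
  qed
  then show ?thesis by (simp add: S_def sum.distrib sum_distrib_left)
qed

lemma S_rec2: assumes "n \<ge> 1"
  shows "S 2 (Suc n) = (2 * int n + 1) * S 2 n + 3 * S 1 n + S 0 n"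
proof -
  have "S 2 (Suc n) = (\<Sum>t\<in>trees n. (2 * int n + 1) * int (depth 1 t) ^ 2 + 3 * int (depth 1 t) + 1)"
    unfolding S_def sum_trees[OF assms, of "\<lambda>k. int k ^ 2"]
  proof (rule sum.cong[OF refl])
    fix t
    define k where "k = int (depth 1 t)"
    have "int (depth 1 t + 1) * int (depth 1 t + 1) ^ 2 + (2 * int n - 2 - int (depth 1 t)) * int (depth 1 t) ^ 2
      = (k + 1) * (k + 1) ^ 2 + (2 * int n - 2 - k) * k ^ 2" by (simp add: k_def add.commute)
    also have "\<dots> = (2 * int n + 1) * k ^ 2 + 3 * k + 1" by algebra
    finally show "int (depth 1 t + 1) * int (depth 1 t + 1) ^ 2 + (2 * int n - 2 - int (depth 1 t)) * int (depth 1 t) ^ 2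
      = (2 * int n + 1) * int (depth 1 t) ^ 2 + 3 * int (depth 1 t) + 1" by (simp add: k_def add.commute)
  qed
  then show ?thesis by (simp add: S_def sum.distrib sum_distrib_left)
qed

lemma S_one: "S 0 1 = 1" "S 1 1 = 0" "S 2 1 = 0"
  unfolding S_def trees_1 by simp_all

lemma closed: "S 0 (Suc (Suc m)) = int (dfact (2*m+1)) \<and>
  S 1 (Suc (Suc m)) = int (dfact (2*m+2)) - int (dfact (2*m+1)) \<and>
  S 2 (Suc (Suc m)) = int (4*m+7) * int (dfact (2*m+1)) - 3 * int (dfact (2*m+2))"
proof (induction m)
  case 0
  have a: "S 0 2 = 1" using S_rec0[of 1] S_one by (simp add: numeral_2_eq_2)
  have b: "S 1 2 = 1" using S_rec1[of 1] S_one by (simp add: numeral_2_eq_2)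
  have c: "S 2 2 = 1" using S_rec2[of 1] S_one by (simp add: numeral_2_eq_2)
  show ?case using a b c by (simp add: numeral_2_eq_2 numeral_eq_Suc)
next
  case (Suc m)
  have d1: "dfact (2 * Suc m + 1) = (2*m+3) * dfact (2*m+1)"
  proof -
    have "2 * Suc m + 1 = Suc (Suc (2*m+1))" by simp
    then have "dfact (2 * Suc m + 1) = Suc (Suc (2*m+1)) * dfact (2*m+1)" by (simp only: dfact.simps)
    moreover have "Suc (Suc (2*m+1)) = 2*m+3" by simp
    ultimately show ?thesis by (simp only:)
  qed
  have d2: "dfact (2 * Suc m + 2) = (2*m+4) * dfact (2*m+2)"
  proof -
    have "2 * Suc m + 2 = Suc (Suc (2*m+2))" by simp
    then have "dfact (2 * Suc m + 2) = Suc (Suc (2*m+2)) * dfact (2*m+2)" by (simp only: dfact.simps)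
    moreover have "Suc (Suc (2*m+2)) = 2*m+4" by simp
    ultimately show ?thesis by (simp only:)
  qed
  have r0: "S 0 (Suc (Suc (Suc m))) = (2 * int (Suc (Suc m)) - 1) * S 0 (Suc (Suc m))"
    by (rule S_rec0) simp
  have r1: "S 1 (Suc (Suc (Suc m))) = 2 * int (Suc (Suc m)) * S 1 (Suc (Suc m)) + S 0 (Suc (Suc m))"
    by (rule S_rec1) simp
  have r2: "S 2 (Suc (Suc (Suc m))) = (2 * int (Suc (Suc m)) + 1) * S 2 (Suc (Suc m)) + 3 * S 1 (Suc (Suc m)) + S 0 (Suc (Suc m))"
    by (rule S_rec2) simp
  define a where "a = int (dfact (2*m+1))"
  define b where "b = int (dfact (2*m+2))"
  have IH: "S 0 (Suc (Suc m)) = a" "S 1 (Suc (Suc m)) = b - a" "S 2 (Suc (Suc m)) = (4 * int m + 7) * a - 3 * b"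
    using Suc.IH by (auto simp: a_def b_def)
  have D1: "int (dfact (2 * Suc m + 1)) = (2 * int m + 3) * a" unfolding d1 a_def by simp
  have D2: "int (dfact (2 * Suc m + 2)) = (2 * int m + 4) * b" unfolding d2 b_def by simp
  have "S 0 (Suc (Suc (Suc m))) = (2 * int m + 3) * a" unfolding r0 IH by simp
  moreover have "S 1 (Suc (Suc (Suc m))) = (2 * int m + 4) * b - (2 * int m + 3) * a"
    unfolding r1 IH by (simp add: algebra_simps)
  moreover have "S 2 (Suc (Suc (Suc m))) = (4 * int m + 11) * ((2 * int m + 3) * a) - 3 * ((2 * int m + 4) * b)"
    unfolding r2 IH by (simp add: algebra_simps)
  ultimately show ?case unfolding D1 D2 by simp
qed

lemma depth_range: assumes "n \<ge> 2" "t \<in> trees n" shows "depth 1 t \<in> {1..n-1}"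
proof -
  have w: "wf_tree t" "leaves t = {1..n}" using assms(2) by (auto simp: trees_def)
  have "nl t = n" using card_leaves[OF w(1)] w(2) by simp
  moreover have "1 \<in> leaves t" using w(2) assms(1) by auto
  ultimately have "depth 1 t < n" using depth_lt by blast
  moreover have "t \<noteq> Leaf j" for j using \<open>nl t = n\<close> assms(1) by auto
  then have "depth 1 t \<ge> 1" by (cases t) auto
  ultimately show ?thesis by auto
qed

theorem lemma11:
  fixes n :: nat
  assumes "n \<ge> 2"
  shows "(\<Sum>k=1..n-1. int (k^2 * d k n))
         = int (4*n - 1) * int (dfact (2*n - 3)) - 3 * int (dfact (2*n - 2))"
proof -
  have fin: "finite (trees n)" using trees_finite assms by simp
  have "(\<Sum>k=1..n-1. int (k^2 * d k n)) = (\<Sum>k=1..n-1. \<Sum>t\<in>{t. t \<in> trees n \<and> depth 1 t = k}. int (depth 1 t) ^ 2)"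
  proof (rule sum.cong[OF refl])
    fix k
    have "(\<Sum>t\<in>{t. t \<in> trees n \<and> depth 1 t = k}. int (depth 1 t) ^ 2) = (\<Sum>t\<in>{t. t \<in> trees n \<and> depth 1 t = k}. int k ^ 2)"
      by (rule sum.cong) auto
    then show "int (k^2 * d k n) = (\<Sum>t\<in>{t. t \<in> trees n \<and> depth 1 t = k}. int (depth 1 t) ^ 2)"
      by (simp add: d_def)
  qed
  also have "\<dots> = S 2 n" unfolding S_def
    by (rule sum.group) (use fin depth_range[OF assms] in auto)
  also have "\<dots> = int (4*n - 1) * int (dfact (2*n - 3)) - 3 * int (dfact (2*n - 2))"
  proof -
    obtain m where m: "n = Suc (Suc m)" using assms by (metis add_2_eq_Suc le_Suc_ex)
    have e: "2*n - 3 = 2*m+1" "2*n - 2 = 2*m+2" "4*n - 1 = 4*m+7" using m by auto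
    have c: "S 2 n = int (4*m+7) * int (dfact (2*m+1)) - 3 * int (dfact (2*m+2))"
      unfolding m using closed[of m] by blast
    show ?thesis unfolding e by (rule c)
  qed
  finally show ?thesis .
qed

end
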